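(* There is no kernel on $\mathbf{R}$ that is shiftable. That is, there is no function $\varphi:\mathbf{R}\to\mathbf{R}$ which is simultaneously (i) a kernel on the entire real line and (ii) shiftable on $\mathbf{R}$.
   Context: A function $\varphi:\mathbf{R}\to\mathbf{R}$ is called shiftable if there exist finitely many fixed functions $\varphi_1,\ldots,\varphi_N:\mathbf{R}\to\mathbf{R}$ such that for every $\tau\in\mathbf{R}$ there are coefficients $c_1(\tau),\ldots,c_N(\tau)\in\mathbf{R}$ with $\varphi(x-\tau)=c_1(\tau)\varphi_1(x)+\cdots+c_N(\tau)\varphi_N(x)$ for all $x\in\mathbf{R}$. A kernel is a smooth function $\varphi:\mathbf{R}\to\mathbf{R}$ that is symmetric ($\varphi(-x)=\varphi(x)$ for all $x$), non-negative ($\varphi(x)\ge 0$ for all $x$), and unimodal with peak at the origin, meaning $\varphi$ is strictly increasing on $(-\infty,0]$ and strictly decreasing on $[0,\infty)$. *)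

theory Defs
  imports "HOL-Analysis.Analysis"
begin

definition smooth_real :: "(real \<Rightarrow> real) \<Rightarrow> bool" where
  "smooth_real f \<longleftrightarrow> (\<forall>n x. (deriv ^^ n) f differentiable (at x))"

definition shiftable :: "(real \<Rightarrow> real) \<Rightarrow> bool" where
  "shiftable \<phi> \<longleftrightarrow>
     (\<exists>(N::nat) (\<phi>s :: nat \<Rightarrow> real \<Rightarrow> real).
        \<forall>\<tau>::real. \<exists>c :: nat \<Rightarrow> real.
          \<forall>x::real. \<phi> (x - \<tau>) = (\<Sum>i<N. c i * \<phi>s i x))"

definition is_kernel :: "(real \<Rightarrow> real) \<Rightarrow> bool" where
  "is_kernel \<phi> \<longleftrightarrow> smooth_real \<phi>
     \<and> (\<forall>x. \<phi> (-x) = \<phi> x)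
     \<and> (\<forall>x. \<phi> x \<ge> 0)
     \<and> strict_mono_on {..0} \<phi>
     \<and> strict_antimono_on {0..} \<phi>"

end

theory Submission
  imports Defs "HOL-Library.Function_Algebras"
begin

lemma sum_app: "(\<Sum>i\<in>A. f i) (x::'b) = (\<Sum>i\<in>A. (f i x :: real))"
  by (induction A rule: infinite_finite_induct) (auto simp: plus_fun_def zero_fun_def)

interpretation FV: vector_space "\<lambda>(r::real) (f::real\<Rightarrow>real) x. r * f x"
  by unfold_locales (auto simp: fun_eq_iff algebra_simps plus_fun_def)

lemma key:
  fixes p :: "nat \<Rightarrow> nat \<Rightarrow> real" and l :: "nat \<Rightarrow> real"
  assumes off: "\<And>j k. j < n \<Longrightarrow> k < n \<Longrightarrow> j \<noteq> k \<Longrightarrow> L \<le> p j k \<and> p j k \<le> L + e"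
    and diag: "\<And>j. j < n \<Longrightarrow> p j j = L + a"
    and a: "a > 0" and L: "L \<ge> 0" and e: "e \<ge> 0" and small: "2 * real n * e < a"
    and eq: "\<And>j. j < n \<Longrightarrow> (\<Sum>k<n. l k * p j k) = 0"
  shows "\<forall>k<n. l k = 0"
proof -
  define S where "S = (\<Sum>k<n. l k)"
  define M where "M = (\<Sum>k<n. \<bar>l k\<bar>)"
  define d where "d j k = p j k - L - (if j = k then a else 0)" for j k
  define R where "R j = (\<Sum>k<n. l k * d j k)" for j
  have M0: "M \<ge> 0" unfolding M_def by (simp add: sum_nonneg)
  have db: "\<bar>d j k\<bar> \<le> e" if "j < n" "k < n" for j k
    using off[OF that] diag[OF that(1)] that e unfolding d_def by (cases "j = k") auto
  have Rb: "\<bar>R j\<bar> \<le> e * M" if "j < n" for j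
  proof -
    have "\<bar>R j\<bar> \<le> (\<Sum>k<n. \<bar>l k * d j k\<bar>)" unfolding R_def by (rule sum_abs)
    also have "\<dots> \<le> (\<Sum>k<n. \<bar>l k\<bar> * e)"
      by (rule sum_mono) (simp add: abs_mult db[OF that] mult_left_mono)
    also have "\<dots> = e * M" unfolding M_def by (simp add: sum_distrib_left mult.commute)
    finally show ?thesis .
  qed
  have Eq: "L * S + a * l j + R j = 0" if "j < n" for j
  proof -
    have "(\<Sum>k<n. l k * p j k) = (\<Sum>k<n. L * l k + (if j = k then l k * a else 0) + l k * d j k)"
      by (rule sum.cong) (auto simp: d_def algebra_simps)
    also have "\<dots> = L * S + a * l j + R j"
      using that by (simp add: sum.distrib sum_distrib_left S_def R_def mult.commute)
    finally show ?thesis using eq[OF that] by simp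
  qed
  have "(\<Sum>j<n. L * S + a * l j + R j) = 0" using Eq by simp
  hence sumeq: "real n * L * S + a * S + (\<Sum>j<n. R j) = 0"
    by (simp add: sum.distrib sum_distrib_left S_def mult.assoc)
  have "\<bar>\<Sum>j<n. R j\<bar> \<le> (\<Sum>j<n. \<bar>R j\<bar>)" by (rule sum_abs)
  also have "\<dots> \<le> (\<Sum>j<n. e * M)" by (rule sum_mono) (simp add: Rb)
  finally have sR: "\<bar>\<Sum>j<n. R j\<bar> \<le> real n * (e * M)" by simp
  have LS: "L * \<bar>S\<bar> \<le> e * M" if "n > 0"
  proof -
    have "\<bar>(real n * L + a) * S\<bar> \<le> real n * (e * M)" using sumeq sR
      by (simp add: algebra_simps)
    moreover have "\<bar>(real n * L + a) * S\<bar> = (real n * L + a) * \<bar>S\<bar>"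
      using a L by (simp add: abs_mult)
    moreover have "real n * L * \<bar>S\<bar> \<le> (real n * L + a) * \<bar>S\<bar>"
      using a by (simp add: mult_right_mono)
    ultimately have "real n * (L * \<bar>S\<bar>) \<le> real n * (e * M)" by (simp add: algebra_simps)
    thus ?thesis using that by simp
  qed
  have lj: "a * \<bar>l j\<bar> \<le> 2 * e * M" if "j < n" for j
  proof -
    have "L * S + R j = - (a * l j)" using Eq[OF that] by linarith
    hence "a * \<bar>l j\<bar> = \<bar>L * S + R j\<bar>" using a by (simp add: abs_mult)
    also have "\<dots> \<le> L * \<bar>S\<bar> + \<bar>R j\<bar>" using L abs_triangle_ineq[of "L*S" "R j"] by (simp add: abs_mult)
    also have "\<dots> \<le> 2 * e * M" using LS Rb[OF that] that by fastforce
    finally show ?thesis .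
  qed
  have "a * M = (\<Sum>j<n. a * \<bar>l j\<bar>)" unfolding M_def by (simp add: sum_distrib_left)
  also have "\<dots> \<le> (\<Sum>j<n. 2 * e * M)" by (rule sum_mono) (simp add: lj)
  finally have "a * M \<le> (2 * real n * e) * M" by simp
  hence "M = 0" using small M0 a
    by (smt (verit) mult_less_cancel_right_pos)
  thus ?thesis unfolding M_def by (simp add: sum_nonneg_eq_0_iff)
qed

theorem mainTheorem1:
  shows "\<not> (\<exists>\<phi> :: real \<Rightarrow> real. is_kernel \<phi> \<and> shiftable \<phi>)"
proof
  assume "\<exists>\<phi> :: real \<Rightarrow> real. is_kernel \<phi> \<and> shiftable \<phi>"
  then obtain \<phi> :: "real \<Rightarrow> real" where K: "is_kernel \<phi>" and Sh: "shiftable \<phi>" by blast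
  from Sh obtain N :: nat and \<phi>s :: "nat \<Rightarrow> real \<Rightarrow> real" where
    sh: "\<forall>\<tau>::real. \<exists>c :: nat \<Rightarrow> real. \<forall>x. \<phi> (x - \<tau>) = (\<Sum>i<N. c i * \<phi>s i x)"
    unfolding shiftable_def by blast
  then obtain c :: "real \<Rightarrow> nat \<Rightarrow> real" where
    c: "\<And>\<tau> x. \<phi> (x - \<tau>) = (\<Sum>i<N. c \<tau> i * \<phi>s i x)"
    using choice[OF sh] by blast
  have sym: "\<And>x. \<phi> (-x) = \<phi> x" and nn: "\<And>x. \<phi> x \<ge> 0"
    and dec0: "strict_antimono_on {0..} \<phi>" using K unfolding is_kernel_def by auto
  have dec: "\<phi> y < \<phi> x" if "0 \<le> x" "x < y" for x y
    using dec0 that unfolding monotone_on_def by auto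
  have absphi: "\<phi> x = \<phi> \<bar>x\<bar>" for x using sym[of x] by (cases "x \<ge> 0") auto
  have peak: "\<phi> x < \<phi> 0" if "x \<noteq> 0" for x
    using dec[of 0 "\<bar>x\<bar>"] that absphi[of x] by auto
  define L where "L = Inf (\<phi> ` {0..})"
  have bdd: "bdd_below (\<phi> ` {0..})" using nn by (auto intro: bdd_belowI[of _ 0])
  have Lle: "L \<le> \<phi> x" for x
  proof -
    have "L \<le> \<phi> \<bar>x\<bar>" unfolding L_def by (rule cInf_lower) (use bdd in auto)
    thus ?thesis using absphi[of x] by simp
  qed
  have L0: "L \<ge> 0" unfolding L_def by (rule cInf_greatest) (use nn in auto)
  define a where "a = \<phi> 0 - L"
  have a0: "a > 0" using Lle[of 1] peak[of 1] unfolding a_def by simp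
  define n where "n = Suc N"
  define e where "e = a / (4 * real n)"
  have npos: "real n > 0" unfolding n_def by simp
  have e0: "e > 0" unfolding e_def using a0 npos by simp
  have "2 * real n * e = a / 2" unfolding e_def using npos by simp
  hence small: "2 * real n * e < a" using a0 by linarith
  have "\<exists>y\<in>\<phi> ` {0..}. y < L + e"
    unfolding L_def by (rule cInf_lessD) (use e0 in \<open>auto simp: L_def\<close>)
  then obtain y where y0: "y \<ge> 0" and yL: "\<phi> y < L + e" by auto
  define T where "T = max y 1"
  have T0: "T > 0" and TL: "\<phi> T < L + e"
  proof -
    show "T > 0" unfolding T_def by simp
    have "\<phi> T \<le> \<phi> y"
    proof (cases "y < 1")
      case True thus ?thesis using dec[of y 1] y0 unfolding T_def by simp
    qed (simp add: T_def)
    thus "\<phi> T < L + e" using yL by simp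
  qed
  have far: "\<phi> z \<le> L + e" if "\<bar>z\<bar> \<ge> T" for z
  proof -
    have "\<phi> \<bar>z\<bar> \<le> \<phi> T" using dec[of T "\<bar>z\<bar>"] that T0 by (cases "\<bar>z\<bar> = T") auto
    thus ?thesis using TL absphi[of z] by simp
  qed
  define p where "p j k = \<phi> ((real j - real k) * T)" for j k :: nat
  define g where "g k = (\<lambda>x. \<phi> (x - real k * T))" for k :: nat
  have gp: "g k (real j * T) = p j k" for j k unfolding g_def p_def by (simp add: algebra_simps)
  have off: "L \<le> p j k \<and> p j k \<le> L + e" if "j \<noteq> k" for j k
  proof -
    have "\<bar>real j - real k\<bar> \<ge> 1" using that by linarith
    hence "\<bar>(real j - real k) * T\<bar> \<ge> T" using T0 by (simp add: abs_mult)
    thus ?thesis using far Lle unfolding p_def by auto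
  qed
  have diag: "p j j = L + a" for j unfolding p_def a_def by simp
  let ?B = "\<phi>s ` {..<N}"
  have gspan: "g k \<in> FV.span ?B" for k
  proof -
    have "g k = (\<Sum>i<N. (\<lambda>x. c (real k * T) i * \<phi>s i x))"
      by (rule ext) (simp add: sum_app g_def c)
    also have "\<dots> \<in> FV.span ?B"
      by (rule FV.span_sum) (intro FV.span_scale FV.span_base, auto)
    finally show ?thesis .
  qed
  have ginj: "inj_on g {..<n}"
  proof (rule inj_onI)
    fix j k assume "j \<in> {..<n}" "k \<in> {..<n}" "g j = g k"
    hence "g j (real j * T) = g k (real j * T)" by simp
    hence "p j k = \<phi> 0" using gp[of j j] gp[of k j] unfolding p_def by simp
    thus "j = k" using peak[of "(real j - real k) * T"] T0 unfolding p_def by (auto split: if_splits)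
  qed
  have "\<not> FV.independent (g ` {..<n})"
  proof
    assume "FV.independent (g ` {..<n})"
    from FV.independent_span_bound[OF _ this] gspan
    have "card (g ` {..<n}) \<le> card ?B" by auto
    also have "\<dots> \<le> N" using card_image_le[of "{..<N}" \<phi>s] by simp
    finally show False using card_image[OF ginj] unfolding n_def by simp
  qed
  then obtain t u where t: "finite t" "t \<subseteq> g ` {..<n}"
    and tsum: "(\<Sum>v\<in>t. (\<lambda>x. u v * v x)) = 0" and tnz: "\<exists>v\<in>t. u v \<noteq> 0"
    unfolding FV.dependent_explicit by blast
  define l where "l k = (if g k \<in> t then u (g k) else 0)" for k
  define K where "K = {k\<in>{..<n}. g k \<in> t}"
  have gK: "g ` K = t" using t unfolding K_def by auto
  have injK: "inj_on g K" using ginj unfolding K_def by (auto intro: inj_on_subset)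
  have eq: "(\<Sum>k<n. l k * p j k) = 0" if "j < n" for j
  proof -
    have "(\<Sum>k<n. l k * p j k) = (\<Sum>k<n. if g k \<in> t then u (g k) * g k (real j * T) else 0)"
      by (rule sum.cong) (auto simp: l_def gp)
    also have "\<dots> = (\<Sum>k\<in>K. u (g k) * g k (real j * T))"
      unfolding K_def by (rule sum.inter_filter[symmetric]) simp
    also have "\<dots> = (\<Sum>v\<in>t. u v * v (real j * T))"
      using sum.reindex[OF injK, of "\<lambda>v. u v * v (real j * T)"] gK by simp
    also have "\<dots> = 0" using fun_cong[OF tsum, of "real j * T"] by (simp add: sum_app)
    finally show ?thesis .
  qed
  have "\<forall>k<n. l k = 0"
    by (rule key[where L = L and e = e and a = a and p = p]) (use off diag a0 L0 e0 small eq in auto)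
  moreover obtain v where "v \<in> t" "u v \<noteq> 0" using tnz by blast
  then obtain k where "k < n" "v = g k" using t by auto
  ultimately show False using \<open>v \<in> t\<close> \<open>u v \<noteq> 0\<close> unfolding l_def by auto
qed

end
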